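(* Let $G$ be a hued patch and let $\varphi:V(C)\to\mathbb{Z}_2^2$ be a single-hexagon 4-coloring of the boundary $C$ of the outer face of $G$, with central hue $c$ and central color $k$. Let $K=\mathbb{Z}_2^2\setminus\{k\}$, let $H$ be the (bipartite) subgraph of $G$ induced by the vertices of hue different from $c$, and let $\varphi'$ be the restriction of $\varphi$ to $V(H)\cap V(C)$. Then $\varphi$ extends to a proper 4-coloring of $G$ if and only if $\varphi'$ extends to a proper 3-coloring of $H$ using the colors in $K$.
   Context: A patch is a connected plane graph all of whose faces, except possibly the outer face, have length three. A hued graph is a graph with a proper coloring $\psi:V\to\mathbb{Z}_3$ (hue); a dappled graph is a hued graph with additionally a proper coloring $\varphi:V\to\mathbb{Z}_2^2$ (color); for a hued graph $C$ and proper $\varphi:V(C)\to\mathbb{Z}_2^2$, $C^\varphi$ is the corresponding dappled graph. Homomorphisms of dappled graphs map adjacent vertices to adjacent vertices and preserve hue and color. The dappled triangular grid $\mathbf{T}$ has vertex set $\mathbb{Z}^2$, with $(i_1,j_1)$ and $(i_2,j_2)$ adjacent iff $(i_2-i_1,j_2-j_1)\in\{\pm(1,0),\pm(0,1),\pm(1,1)\}$, hue $(i+j)\bmod 3$ and color $(i\bmod 2,j\bmod 2)$ at $(i,j)$. A hexagon is the dappled subgraph of $\mathbf{T}$ induced by a vertex (its center) and its neighbors. A 4-coloring $\varphi$ of a connected hued graph $C$ is a single-hexagon coloring if there is a homomorphism $f$ from $C^\varphi$ to $\mathbf{T}$ whose image lies in a hexagon $X$; the central hue and central color are the hue and color of the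 center of $X$. (In that case a vertex of $C$ has color $k$ iff it has hue $c$.) The boundary $C$ carries the hues inherited from $G$. *)

theory Defs
  imports Main "HOL-Library.Numeral_Type"
begin

text \<open>A finite simple graph: vertex set V and a symmetric irreflexive set E of
  ordered pairs (darts); each undirected edge appears as both (u,w) and (w,u).\<close>

definition simple_graph :: "'v set \<Rightarrow> ('v \<times> 'v) set \<Rightarrow> bool" where
  "simple_graph V E \<longleftrightarrow> finite V \<and> E \<subseteq> V \<times> V \<and>
     (\<forall>u w. (u, w) \<in> E \<longrightarrow> (w, u) \<in> E) \<and> (\<forall>u. (u, u) \<notin> E)"

definition nbrs :: "('v \<times> 'v) set \<Rightarrow> 'v \<Rightarrow> 'v set" where
  "nbrs E u = {w. (u, w) \<in> E}"

definition connected_graph :: "'v set \<Rightarrow> ('v \<times> 'v) set \<Rightarrow> bool" where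
  "connected_graph V E \<longleftrightarrow> V \<noteq> {} \<and> (\<forall>u\<in>V. \<forall>w\<in>V. (u, w) \<in> E\<^sup>*)"

definition proper_col :: "'v set \<Rightarrow> ('v \<times> 'v) set \<Rightarrow> ('v \<Rightarrow> 'c) \<Rightarrow> bool" where
  "proper_col V E f \<longleftrightarrow> (\<forall>(u, w)\<in>E. f u \<noteq> f w)"

text \<open>A rotation system assigns to every vertex u a cyclic permutation rot u of its
  neighbourhood (the clockwise order of the edges around u in the embedding).\<close>

definition rotation_system :: "'v set \<Rightarrow> ('v \<times> 'v) set \<Rightarrow> ('v \<Rightarrow> 'v \<Rightarrow> 'v) \<Rightarrow> bool" where
  "rotation_system V E rot \<longleftrightarrow>
     (\<forall>u\<in>V. bij_betw (rot u) (nbrs E u) (nbrs E u) \<and>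
        (\<forall>w\<in>nbrs E u. \<forall>w'\<in>nbrs E u. \<exists>n. (rot u ^^ n) w = w'))"

text \<open>Faces are the orbits of this permutation of the darts; the length of a
  face is the number of darts in its orbit (the length of its facial walk).\<close>

definition face_step :: "('v \<Rightarrow> 'v \<Rightarrow> 'v) \<Rightarrow> 'v \<times> 'v \<Rightarrow> 'v \<times> 'v" where
  "face_step rot = (\<lambda>(u, w). (w, rot w u))"

definition face_orbit :: "('v \<Rightarrow> 'v \<Rightarrow> 'v) \<Rightarrow> 'v \<times> 'v \<Rightarrow> ('v \<times> 'v) set" where
  "face_orbit rot d = {(face_step rot ^^ n) d | n. True}"

definition faces :: "('v \<times> 'v) set \<Rightarrow> ('v \<Rightarrow> 'v \<Rightarrow> 'v) \<Rightarrow> ('v \<times> 'v) set set" where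
  "faces E rot = face_orbit rot ` E"

text \<open>A connected plane graph: a connected simple graph with a rotation system of
  genus 0 (Euler's formula |V| - |E| + |F| = 2; |E| = number of darts / 2).
  The one-vertex graph (no edges) is a plane graph with a single (outer) face.\<close>

definition plane_graph :: "'v set \<Rightarrow> ('v \<times> 'v) set \<Rightarrow> ('v \<Rightarrow> 'v \<Rightarrow> 'v) \<Rightarrow> bool" where
  "plane_graph V E rot \<longleftrightarrow> simple_graph V E \<and> connected_graph V E \<and>
     rotation_system V E rot \<and>
     (E = {} \<or> card V + card (faces E rot) = card E div 2 + 2)"

text \<open>A patch with designated outer face Out (a face, i.e. a set of darts; Out = {} for the
  one-vertex graph): all faces other than Out have length three.\<close>

definition patch :: "'v set \<Rightarrow> ('v \<times> 'v) set \<Rightarrow> ('v \<Rightarrow> 'v \<Rightarrow> 'v) \<Rightarrow> ('v \<times> 'v) set \<Rightarrow> bool" where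
  "patch V E rot Out \<longleftrightarrow> plane_graph V E rot \<and>
     (if E = {} then Out = {}
      else Out \<in> faces E rot \<and> (\<forall>F\<in>faces E rot. F \<noteq> Out \<longrightarrow> card F = 3))"

definition bdry_V :: "'v set \<Rightarrow> ('v \<times> 'v) set \<Rightarrow> 'v set" where
  "bdry_V V Out = (if Out = {} then V else fst ` Out)"

definition bdry_E :: "('v \<times> 'v) set \<Rightarrow> ('v \<times> 'v) set" where
  "bdry_E Out = Out \<union> converse Out"

definition T_adj :: "int \<times> int \<Rightarrow> int \<times> int \<Rightarrow> bool" where
  "T_adj p q \<longleftrightarrow> (fst q - fst p, snd q - snd p) \<in>
     {(1, 0), (-1, 0), (0, 1), (0, -1), (1, 1), (-1, -1)}"

definition T_hue :: "int \<times> int \<Rightarrow> 3" where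
  "T_hue p = of_int (fst p + snd p)"

definition T_color :: "int \<times> int \<Rightarrow> 2 \<times> 2" where
  "T_color p = (of_int (fst p), of_int (snd p))"

definition hexagon :: "int \<times> int \<Rightarrow> (int \<times> int) set" where
  "hexagon z = insert z {q. T_adj z q}"

definition dappled_hom_T :: "'v set \<Rightarrow> ('v \<times> 'v) set \<Rightarrow> ('v \<Rightarrow> 3) \<Rightarrow> ('v \<Rightarrow> 2 \<times> 2)
    \<Rightarrow> ('v \<Rightarrow> int \<times> int) \<Rightarrow> bool" where
  "dappled_hom_T V E hue col f \<longleftrightarrow>
     (\<forall>(u, w)\<in>E. T_adj (f u) (f w)) \<and>
     (\<forall>v\<in>V. T_hue (f v) = hue v \<and> T_color (f v) = col v)"

definition single_hexagon_coloring :: "'v set \<Rightarrow> ('v \<times> 'v) set \<Rightarrow> ('v \<Rightarrow> 3) \<Rightarrow> ('v \<Rightarrow> 2 \<times> 2)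
    \<Rightarrow> 3 \<Rightarrow> 2 \<times> 2 \<Rightarrow> bool" where
  "single_hexagon_coloring V E hue col c k \<longleftrightarrow> proper_col V E col \<and>
     (\<exists>f z. dappled_hom_T V E hue col f \<and> f ` V \<subseteq> hexagon z \<and>
            T_hue z = c \<and> T_color z = k)"

end

theory Submission
  imports Defs
begin

lemma funpow_period_mult:
  assumes "(f ^^ p) x = x" shows "(f ^^ (p * k)) x = x"
proof (induction k)
  case 0 then show ?case by simp
next
  case (Suc k)
  have "(f ^^ (p * Suc k)) x = (f ^^ p) ((f ^^ (p * k)) x)"
    by (simp only: mult_Suc_right funpow_add comp_apply)
  then show ?case using assms Suc.IH by metis
qed

locale pgr =
  fixes V :: "'v set" and E :: "('v \<times> 'v) set" and rot :: "'v \<Rightarrow> 'v \<Rightarrow> 'v"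
  assumes sg: "simple_graph V E" and cg: "connected_graph V E" and rs: "rotation_system V E rot"
begin

abbreviation "stp \<equiv> face_step rot"
abbreviation "orb \<equiv> face_orbit rot"

lemma finV: "finite V" using sg by (simp add: simple_graph_def)
lemma EV: "E \<subseteq> V \<times> V" using sg by (simp add: simple_graph_def)
lemma finE: "finite E" using finV EV finite_subset by blast
lemma symE: "(u, w) \<in> E \<Longrightarrow> (w, u) \<in> E" using sg by (simp add: simple_graph_def)
lemma irrE: "(u, u) \<notin> E" using sg by (simp add: simple_graph_def)

lemma rot_bij: "u \<in> V \<Longrightarrow> bij_betw (rot u) (nbrs E u) (nbrs E u)"
  using rs by (simp add: rotation_system_def)
lemma rot_cyc: "u \<in> V \<Longrightarrow> w \<in> nbrs E u \<Longrightarrow> w' \<in> nbrs E u \<Longrightarrow> \<exists>n. (rot u ^^ n) w = w'"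
  using rs by (simp add: rotation_system_def)

lemma rot_in: "u \<in> V \<Longrightarrow> w \<in> nbrs E u \<Longrightarrow> rot u w \<in> nbrs E u"
  using rot_bij bij_betwE by blast

lemma rotn_in: "u \<in> V \<Longrightarrow> w \<in> nbrs E u \<Longrightarrow> (rot u ^^ n) w \<in> nbrs E u"
  by (induction n) (auto intro: rot_in)

lemma stp_def2: "stp (u, w) = (w, rot w u)" by (simp add: face_step_def)

lemma fst_stp: "fst (stp x) = snd x" by (cases x) (simp add: face_step_def)

lemma stp_E: "x \<in> E \<Longrightarrow> stp x \<in> E"
proof (cases x)
  case (Pair u w)
  assume "x \<in> E"
  then have "w \<in> V" "u \<in> nbrs E w" using EV symE Pair by (auto simp: nbrs_def)
  then have "rot w u \<in> nbrs E w" by (rule rot_in)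
  then show ?thesis using Pair by (simp add: face_step_def nbrs_def)
qed

lemma stp_inj: "inj_on stp E"
proof (rule inj_onI)
  fix x y assume xy: "x \<in> E" "y \<in> E" "stp x = stp y"
  obtain u w where x: "x = (u, w)" by (cases x)
  obtain u' w' where y: "y = (u', w')" by (cases y)
  from xy x y have ww: "w' = w" and r: "rot w u = rot w u'" by (auto simp: face_step_def)
  from xy x y ww have "w \<in> V" "u \<in> nbrs E w" "u' \<in> nbrs E w" using EV symE by (auto simp: nbrs_def)
  then have "u = u'" using r rot_bij[of w] by (auto simp: bij_betw_def inj_on_def)
  then show "x = y" using x y ww by simp
qed

lemma stpn_E: "x \<in> E \<Longrightarrow> (stp ^^ n) x \<in> E"
  by (induction n) (auto intro: stp_E)

lemma stpn_cancel: "a \<in> E \<Longrightarrow> b \<in> E \<Longrightarrow> (stp ^^ n) a = (stp ^^ n) b \<Longrightarrow> a = b"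
proof (induction n)
  case 0 then show ?case by simp
next
  case (Suc n)
  then have "stp ((stp ^^ n) a) = stp ((stp ^^ n) b)" by simp
  then have "(stp ^^ n) a = (stp ^^ n) b" using stp_inj stpn_E Suc.prems by (meson inj_onD)
  then show ?case using Suc by blast
qed

lemma period: assumes "x \<in> E" shows "\<exists>p>0. (stp ^^ p) x = x"
proof -
  let ?g = "\<lambda>n. (stp ^^ n) x"
  have "?g ` {0..card E} \<subseteq> E" by (rule image_subsetI) (rule stpn_E[OF assms])
  then have "card (?g ` {0..card E}) \<le> card E" using finE card_mono by blast
  then have "\<not> inj_on ?g {0..card E}" using card_image by fastforce
  then obtain i j where ij: "i \<in> {0..card E}" "j \<in> {0..card E}" "i \<noteq> j" "?g i = ?g j"
    by (auto simp: inj_on_def)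
  show ?thesis
  proof (cases "i < j")
    case True
    have "(stp ^^ i) ((stp ^^ (j - i)) x) = (stp ^^ i) x"
      using ij True by (metis funpow_add comp_apply le_add_diff_inverse less_imp_le)
    then have "(stp ^^ (j - i)) x = x" using stpn_cancel stpn_E assms by blast
    then show ?thesis using True by (intro exI[of _ "j - i"]) simp
  next
    case False
    then have "j < i" using ij by simp
    have "(stp ^^ j) ((stp ^^ (i - j)) x) = (stp ^^ j) x"
      using ij \<open>j < i\<close> by (metis funpow_add comp_apply le_add_diff_inverse less_imp_le)
    then have "(stp ^^ (i - j)) x = x" using stpn_cancel stpn_E assms by blast
    then show ?thesis using \<open>j < i\<close> by (intro exI[of _ "i - j"]) simp
  qed
qed

lemma orb_iff: "z \<in> orb x \<longleftrightarrow> (\<exists>n. z = (stp ^^ n) x)"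
  by (simp add: face_orbit_def)

lemma orb_E: assumes "x \<in> E" shows "orb x \<subseteq> E"
proof
  fix z assume "z \<in> orb x"
  then obtain n where "z = (stp ^^ n) x" unfolding orb_iff by blast
  then show "z \<in> E" using stpn_E[OF assms] by simp
qed

lemma orb_fin: "x \<in> E \<Longrightarrow> finite (orb x)"
  by (rule finite_subset[OF orb_E finE])

lemma orb_self: "x \<in> orb x"
  unfolding orb_iff by (rule exI[of _ 0]) simp

lemma orb_stp: assumes "y \<in> orb x" shows "stp y \<in> orb x"
proof -
  obtain n where "y = (stp ^^ n) x" using assms by (auto simp: face_orbit_def)
  then have "stp y = (stp ^^ Suc n) x" by simp
  then show ?thesis unfolding orb_iff by blast
qed

lemma orb_back: assumes "x \<in> E" "y \<in> orb x" shows "x \<in> orb y"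
proof -
  obtain a where a: "y = (stp ^^ a) x" using assms(2) unfolding orb_iff by blast
  obtain p where p: "p > 0" "(stp ^^ p) x = x" using period assms(1) by blast
  have "(stp ^^ (a * (p - 1))) y = (stp ^^ (a * (p - 1) + a)) x" using a by (simp add: funpow_add)
  also have "a * (p - 1) + a = p * a" using p(1) by (cases p) (simp_all add: algebra_simps)
  also have "(stp ^^ (p * a)) x = x" by (rule funpow_period_mult[OF p(2)])
  finally show ?thesis unfolding orb_iff by (intro exI[of _ "a * (p - 1)"]) simp
qed

lemma orb_sub: assumes "y \<in> orb x" shows "orb y \<subseteq> orb x"
proof
  fix z assume "z \<in> orb y"
  then obtain b where b: "z = (stp ^^ b) y" unfolding orb_iff by blast
  obtain a where a: "y = (stp ^^ a) x" using assms unfolding orb_iff by blast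
  have "z = (stp ^^ (b + a)) x" using a b by (simp add: funpow_add)
  then show "z \<in> orb x" unfolding orb_iff by (intro exI[of _ "b + a"])
qed

lemma orb_eq: assumes "x \<in> E" "y \<in> orb x" shows "orb y = orb x"
proof (rule subset_antisym)
  show "orb y \<subseteq> orb x" by (rule orb_sub[OF assms(2)])
  show "orb x \<subseteq> orb y" by (rule orb_sub[OF orb_back[OF assms]])
qed

lemma orb_disj: assumes "x \<in> E" "y \<in> E" "orb x \<noteq> orb y" shows "orb x \<inter> orb y = {}"
proof (rule ccontr)
  assume "orb x \<inter> orb y \<noteq> {}"
  then obtain z where z: "z \<in> orb x" "z \<in> orb y" by blast
  have "orb z = orb x" by (rule orb_eq[OF assms(1) z(1)])
  moreover have "orb z = orb y" by (rule orb_eq[OF assms(2) z(2)])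
  ultimately show False using assms(3) by simp
qed

lemma orb_stp_eq: "x \<in> E \<Longrightarrow> orb (stp x) = orb x"
  by (rule orb_eq) (auto intro: orb_stp orb_self)

lemma stp_bij: assumes "x \<in> E" shows "bij_betw stp (orb x) (orb x)"
proof -
  have "inj_on stp (orb x)" by (rule inj_on_subset[OF stp_inj orb_E[OF assms]])
  moreover have "stp ` orb x \<subseteq> orb x" using orb_stp by blast
  moreover have "orb x \<subseteq> stp ` orb x"
  proof
    fix y assume y: "y \<in> orb x"
    then have yE: "y \<in> E" using orb_E[OF assms] by blast
    obtain q where q: "q > 0" "(stp ^^ q) y = y" using period[OF yE] by blast
    then obtain q' where q': "q = Suc q'" by (cases q) auto
    then have "stp ((stp ^^ q') y) = y" using q by (metis funpow.simps(2) comp_apply)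
    moreover have "(stp ^^ q') y \<in> orb y" unfolding orb_iff by blast
    then have "(stp ^^ q') y \<in> orb x" using orb_sub[OF y] by blast
    ultimately show "y \<in> stp ` orb x" by (metis image_eqI)
  qed
  ultimately show ?thesis by (auto simp: bij_betw_def)
qed

lemma telescope: assumes "x \<in> E" shows "(\<Sum>y\<in>orb x. Q (snd y) - Q (fst y) :: int) = 0"
proof -
  have "(\<Sum>y\<in>orb x. Q (fst (stp y))) = (\<Sum>y\<in>orb x. Q (fst y))"
    using sum.reindex_bij_betw[OF stp_bij[OF assms], of "\<lambda>y. Q (fst y)"] by simp
  then show ?thesis by (simp add: sum_subtractf fst_stp)
qed

lemma faces_fin: "finite (faces E rot)" using finE by (simp add: faces_def)

lemma mem_Union_faces: assumes "\<Phi> \<subseteq> faces E rot" "x \<in> E" shows "x \<in> \<Union>\<Phi> \<longleftrightarrow> orb x \<in> \<Phi>"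
proof
  assume "x \<in> \<Union>\<Phi>"
  then obtain f where f: "f \<in> \<Phi>" "x \<in> f" by blast
  then obtain y where y: "y \<in> E" "f = orb y" using assms by (auto simp: faces_def)
  then have "orb x = f" using orb_eq[of y x] f by simp
  then show "orb x \<in> \<Phi>" using f by simp
next
  assume "orb x \<in> \<Phi>" then show "x \<in> \<Union>\<Phi>" using orb_self by blast
qed

lemma sum_faces: assumes "\<Phi> \<subseteq> faces E rot"
  shows "(\<Sum>x\<in>{x\<in>E. orb x \<in> \<Phi>}. g x) = (\<Sum>f\<in>\<Phi>. \<Sum>x\<in>f. g x)"
proof -
  have eq: "{x\<in>E. orb x \<in> \<Phi>} = \<Union>\<Phi>"
  proof
    show "{x\<in>E. orb x \<in> \<Phi>} \<subseteq> \<Union>\<Phi>" using orb_self by blast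
    show "\<Union>\<Phi> \<subseteq> {x\<in>E. orb x \<in> \<Phi>}"
    proof
      fix x assume x: "x \<in> \<Union>\<Phi>"
      then obtain f where f: "f \<in> \<Phi>" "x \<in> f" by blast
      then obtain y where y: "y \<in> E" "f = orb y" using assms by (auto simp: faces_def)
      then have "x \<in> E" using f orb_E by blast
      then show "x \<in> {x\<in>E. orb x \<in> \<Phi>}" using mem_Union_faces[OF assms] x by blast
    qed
  qed
  have "\<forall>A\<in>\<Phi>. finite A" using assms orb_fin by (auto simp: faces_def)
  moreover have "\<forall>A\<in>\<Phi>. \<forall>B\<in>\<Phi>. A \<noteq> B \<longrightarrow> A \<inter> B = {}"
  proof (intro ballI impI)
    fix A B assume "A \<in> \<Phi>" "B \<in> \<Phi>" "A \<noteq> B"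
    have "A \<in> orb ` E" "B \<in> orb ` E" using assms \<open>A \<in> \<Phi>\<close> \<open>B \<in> \<Phi>\<close> unfolding faces_def by blast+
    then obtain a b where "a \<in> E" "b \<in> E" "A = orb a" "B = orb b" by blast
    then show "A \<inter> B = {}" using orb_disj \<open>A \<noteq> B\<close> by simp
  qed
  ultimately show ?thesis unfolding eq by (simp add: sum.Union_disjoint)
qed

end

lemma conn_card:
  fixes s t :: "'d \<Rightarrow> 'n" and r :: "'d \<Rightarrow> 'd"
  assumes finX: "finite X" and finD: "finite D"
    and rD: "\<And>x. x \<in> D \<Longrightarrow> r x \<in> D \<and> s (r x) = t x \<and> t (r x) = s x"
    and root: "root \<in> X"
    and conn: "\<And>v. v \<in> X \<Longrightarrow> (root, v) \<in> {(s x, t x) | x. x \<in> D}\<^sup>*"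
  shows "2 * (card X - 1) \<le> card D"
proof -
  define R where "R = {(s x, t x) | x. x \<in> D}"
  define dist where "dist v = (LEAST n. (root, v) \<in> R ^^ n)" for v
  have ex: "\<exists>x. x \<in> D \<and> t x = v \<and> dist (s x) < dist v" if v: "v \<in> X" "v \<noteq> root" for v
  proof -
    have "(root, v) \<in> R\<^sup>*" unfolding R_def by (rule conn[OF v(1)])
    then obtain n where n: "(root, v) \<in> R ^^ n" unfolding rtrancl_power by blast
    have dv: "(root, v) \<in> R ^^ dist v" unfolding dist_def using n by (rule LeastI)
    have "dist v \<noteq> 0"
    proof
      assume "dist v = 0"
      then show False using dv v(2) by simp
    qed
    then obtain m where m: "dist v = Suc m" by (cases "dist v") auto
    obtain y where y: "(root, y) \<in> R ^^ m" "(y, v) \<in> R" using dv unfolding m by (rule relpow_Suc_E)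
    have "dist y \<le> m" unfolding dist_def using y(1) by (rule Least_le)
    from y(2) obtain x where "x \<in> D" "s x = y" "t x = v" unfolding R_def by blast
    then show ?thesis using \<open>dist y \<le> m\<close> m by auto
  qed
  define f where "f v = (SOME x. x \<in> D \<and> t x = v \<and> dist (s x) < dist v)" for v
  let ?X = "X - {root}"
  have f: "f v \<in> D \<and> t (f v) = v \<and> dist (s (f v)) < dist v" if "v \<in> ?X" for v
  proof -
    have "\<exists>x. x \<in> D \<and> t x = v \<and> dist (s x) < dist v" using ex that by blast
    then show ?thesis unfolding f_def by (rule someI_ex)
  qed
  have inj1: "inj_on f ?X"
  proof (rule inj_onI)
    fix a b assume ab: "a \<in> ?X" "b \<in> ?X" "f a = f b"
    have "a = t (f a)" using f[OF ab(1)] by simp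
    also have "\<dots> = t (f b)" using ab(3) by (rule arg_cong)
    also have "\<dots> = b" using f[OF ab(2)] by simp
    finally show "a = b" .
  qed
  have inj2: "inj_on (\<lambda>v. r (f v)) ?X"
  proof (rule inj_onI)
    fix a b assume ab: "a \<in> ?X" "b \<in> ?X" "r (f a) = r (f b)"
    have "a = s (r (f a))" using f[OF ab(1)] rD[of "f a"] by simp
    also have "\<dots> = s (r (f b))" using ab(3) by (rule arg_cong)
    also have "\<dots> = b" using f[OF ab(2)] rD[of "f b"] by simp
    finally show "a = b" .
  qed
  have disj: "f ` ?X \<inter> (\<lambda>v. r (f v)) ` ?X = {}"
  proof (rule ccontr)
    assume "f ` ?X \<inter> (\<lambda>v. r (f v)) ` ?X \<noteq> {}"
    then obtain a b where ab: "a \<in> ?X" "b \<in> ?X" "f a = r (f b)" by blast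
    have 1: "dist (s (f a)) < dist (t (f a))" using f[OF ab(1)] by simp
    have 2: "s (f a) = t (f b)" "t (f a) = s (f b)" using ab(3) f[OF ab(2)] rD[of "f b"] by simp_all
    have 3: "dist (s (f b)) < dist (t (f b))" using f[OF ab(2)] by simp
    show False using 1 3 unfolding 2 by simp
  qed
  have sub: "f ` ?X \<union> (\<lambda>v. r (f v)) ` ?X \<subseteq> D"
  proof
    fix y assume "y \<in> f ` ?X \<union> (\<lambda>v. r (f v)) ` ?X"
    then obtain v where v: "v \<in> ?X" "y = f v \<or> y = r (f v)" by blast
    have "f v \<in> D" using f[OF v(1)] by simp
    then show "y \<in> D" using v(2) rD[of "f v"] by auto
  qed
  have fX: "finite ?X" using finX by simp
  have "card (f ` ?X \<union> (\<lambda>v. r (f v)) ` ?X) = card (f ` ?X) + card ((\<lambda>v. r (f v)) ` ?X)"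
    by (rule card_Un_disjoint[OF finite_imageI[OF fX] finite_imageI[OF fX] disj])
  also have "\<dots> = card ?X + card ?X" by (simp only: card_image[OF inj1] card_image[OF inj2])
  finally have "card (f ` ?X \<union> (\<lambda>v. r (f v)) ` ?X) = card ?X + card ?X" .
  moreover have "card ?X = card X - 1" using root finX by simp
  moreover have "card (f ` ?X \<union> (\<lambda>v. r (f v)) ` ?X) \<le> card D" by (rule card_mono[OF finD sub])
  ultimately show ?thesis by simp
qed

lemma sum_pairs_cancel:
  fixes g :: "'a \<times> 'a \<Rightarrow> int"
  assumes "finite A" "\<And>x. x \<in> A \<Longrightarrow> prod.swap x \<in> A \<Longrightarrow> g (prod.swap x) = - g x"
  shows "(\<Sum>x\<in>{x\<in>A. prod.swap x \<in> A}. g x) = 0"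
proof -
  let ?I = "{x\<in>A. prod.swap x \<in> A}"
  have "bij_betw prod.swap ?I ?I" by (rule bij_betw_byWitness[where f' = prod.swap]) auto
  then have "(\<Sum>x\<in>?I. g (prod.swap x)) = (\<Sum>x\<in>?I. g x)" by (rule sum.reindex_bij_betw)
  moreover have "(\<Sum>x\<in>?I. g (prod.swap x)) = (\<Sum>x\<in>?I. - g x)"
    by (rule sum.cong) (auto simp: assms(2))
  ultimately have "(\<Sum>x\<in>?I. g x) = - (\<Sum>x\<in>?I. g x)" by (simp add: sum_negf)
  then show ?thesis by simp
qed

lemma sum_crossing:
  fixes g :: "'a \<times> 'a \<Rightarrow> int"
  assumes "finite A" "\<And>x. x \<in> A \<Longrightarrow> prod.swap x \<in> A \<Longrightarrow> g (prod.swap x) = - g x"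
  shows "(\<Sum>x\<in>A. g x) = (\<Sum>x\<in>{x\<in>A. prod.swap x \<notin> A}. g x)"
proof -
  have e: "A = {x\<in>A. prod.swap x \<in> A} \<union> {x\<in>A. prod.swap x \<notin> A}" by blast
  have "(\<Sum>x\<in>{x\<in>A. prod.swap x \<in> A} \<union> {x\<in>A. prod.swap x \<notin> A}. g x) = (\<Sum>x\<in>{x\<in>A. prod.swap x \<in> A}. g x) + (\<Sum>x\<in>{x\<in>A. prod.swap x \<notin> A}. g x)"
    by (rule sum.union_disjoint) (use assms(1) in auto)
  then have "(\<Sum>x\<in>A. g x) = (\<Sum>x\<in>{x\<in>A. prod.swap x \<in> A}. g x) + (\<Sum>x\<in>{x\<in>A. prod.swap x \<notin> A}. g x)"
    using e by simp
  then show ?thesis using sum_pairs_cancel[of A g, OF assms] by simp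
qed

lemma sum_single_nz:
  fixes g :: "'a \<Rightarrow> int"
  assumes "finite C" "x0 \<in> C" "\<And>x. x \<in> C \<Longrightarrow> x \<noteq> x0 \<Longrightarrow> g x = 0"
  shows "(\<Sum>x\<in>C. g x) = g x0"
proof -
  have "(\<Sum>x\<in>C. g x) = g x0 + (\<Sum>x\<in>C - {x0}. g x)" by (rule sum.remove[OF assms(1,2)])
  moreover have "(\<Sum>x\<in>C - {x0}. g x) = 0" using assms(3) by (intro sum.neutral) blast
  ultimately show ?thesis by simp
qed

lemma even_card_sym:
  assumes "finite E" "\<And>u w. (u, w) \<in> E \<Longrightarrow> (w, u) \<in> E" "\<And>u. (u, u) \<notin> E"
  shows "even (card E)"
  using assms
proof (induction "card E" arbitrary: E rule: less_induct)
  case less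
  show ?case
  proof (cases "E = {}")
    case True then show ?thesis by simp
  next
    case False
    then obtain u w where uw: "(u, w) \<in> E" by auto
    have wu: "(w, u) \<in> E" using less.prems(2) uw by blast
    have ne: "u \<noteq> w" using less.prems(3) uw by blast
    define E' where "E' = E - {(u, w), (w, u)}"
    have fin': "finite E'" using less.prems(1) by (simp add: E'_def)
    have c: "card E = card E' + 2"
    proof -
      have sub: "{(u, w), (w, u)} \<subseteq> E" using uw wu by blast
      have c2: "card {(u, w), (w, u)} = 2" using ne by simp
      have "card E' = card E - 2" unfolding E'_def using card_Diff_subset[OF _ sub] c2 by simp
      moreover have "2 \<le> card E" using card_mono[OF less.prems(1) sub] c2 by simp
      ultimately show ?thesis by simp
    qed
    have "even (card E')"
    proof (rule less.hyps)
      show "card E' < card E" using c by simp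
      show "finite E'" by (rule fin')
      show "\<And>a b. (a, b) \<in> E' \<Longrightarrow> (b, a) \<in> E'" using less.prems(2) by (auto simp: E'_def)
      show "\<And>a. (a, a) \<notin> E'" using less.prems(3) by (auto simp: E'_def)
    qed
    then show ?thesis using c by simp
  qed
qed

lemma crossing_step:
  assumes "(a, b) \<in> R\<^sup>*" "a \<in> W" "b \<notin> W"
  shows "\<exists>p q. (p, q) \<in> R \<and> p \<in> W \<and> q \<notin> W"
  using assms
proof (induction rule: rtrancl_induct)
  case base then show ?case by simp
next
  case (step y z)
  show ?case
  proof (cases "y \<in> W")
    case True then show ?thesis using step by blast
  next
    case False then show ?thesis using step by blast
  qed
qed

lemma rtrancl_sym:
  assumes "\<And>p q. (p, q) \<in> R \<Longrightarrow> (q, p) \<in> R" "(a, b) \<in> R\<^sup>*"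
  shows "(b, a) \<in> R\<^sup>*"
  using assms(2)
proof (induction rule: rtrancl_induct)
  case base then show ?case by simp
next
  case (step y z)
  then have "(z, y) \<in> R" using assms(1) by blast
  then show ?case using step.IH by (rule converse_rtrancl_into_rtrancl)
qed

context pgr
begin

lemma cut_exists:
  assumes \<Phi>: "\<Phi> \<subseteq> faces E rot" "\<Phi> \<noteq> {}" "\<Phi> \<noteq> faces E rot"
  shows "\<exists>x\<in>E. orb x \<in> \<Phi> \<and> orb (prod.swap x) \<notin> \<Phi>"
proof (rule ccontr)
  assume "\<not> ?thesis"
  then have NC: "\<And>x. x \<in> E \<Longrightarrow> orb x \<in> \<Phi> \<Longrightarrow> orb (prod.swap x) \<in> \<Phi>" by blast
  define mem where "mem x \<longleftrightarrow> orb x \<in> \<Phi>" for x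
  have NC2: "mem (w, u) \<longleftrightarrow> mem (u, w)" if "(u, w) \<in> E" for u w
    using NC[of "(u, w)"] NC[of "(w, u)"] that symE by (auto simp: mem_def)
  have rotstep: "mem (v, rot v u) \<longleftrightarrow> mem (v, u)" if "v \<in> V" "u \<in> nbrs E v" for v u
  proof -
    have uv: "(u, v) \<in> E" using that symE by (auto simp: nbrs_def)
    have "orb (v, rot v u) = orb (u, v)" using orb_stp_eq[OF uv] by (simp add: face_step_def)
    then have "mem (v, rot v u) \<longleftrightarrow> mem (u, v)" by (simp add: mem_def)
    also have "\<dots> \<longleftrightarrow> mem (v, u)" using NC2[OF uv] by simp
    finally show ?thesis .
  qed
  have rotn: "mem (v, (rot v ^^ n) u) \<longleftrightarrow> mem (v, u)" if "v \<in> V" "u \<in> nbrs E v" for v u n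
  proof (induction n)
    case 0 then show ?case by simp
  next
    case (Suc n)
    have "(rot v ^^ n) u \<in> nbrs E v" by (rule rotn_in[OF that])
    then show ?case using rotstep[OF that(1)] Suc by simp
  qed
  have allsame: "mem (v, u) \<longleftrightarrow> mem (v, u')" if h: "v \<in> V" "u \<in> nbrs E v" "u' \<in> nbrs E v" for v u u'
  proof -
    obtain n where "(rot v ^^ n) u = u'" using rot_cyc[OF h] by blast
    then show ?thesis using rotn[OF h(1,2), of n] by simp
  qed
  obtain f0 where f0: "f0 \<in> \<Phi>" using \<Phi>(2) by blast
  then have "f0 \<in> orb ` E" using \<Phi>(1) unfolding faces_def by blast
  then obtain x0 where x0: "x0 \<in> E" "orb x0 = f0" by blast
  obtain a b where ab: "x0 = (a, b)" by (cases x0)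
  have mx0: "mem (a, b)" using x0 f0 ab by (simp add: mem_def)
  have aV: "a \<in> V" using x0 ab EV by blast
  have all: "\<forall>u\<in>nbrs E v. mem (v, u)" if "(a, v) \<in> E\<^sup>*" for v
    using that
  proof (induction rule: rtrancl_induct)
    case base
    have "b \<in> nbrs E a" using x0 ab by (simp add: nbrs_def)
    then show ?case using allsame[OF aV] mx0 by blast
  next
    case (step p q)
    show ?case
    proof
      fix u assume u: "u \<in> nbrs E q"
      have qV: "q \<in> V" using step.hyps(2) EV by blast
      have pq: "p \<in> nbrs E q" using step.hyps(2) symE by (simp add: nbrs_def)
      have "mem (q, u) \<longleftrightarrow> mem (q, p)" using allsame[OF qV u pq] .
      also have "\<dots> \<longleftrightarrow> mem (p, q)" using NC2[OF step.hyps(2)] by simp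
      also have "mem (p, q)" using step.IH step.hyps(2) by (simp add: nbrs_def)
      finally show "mem (q, u)" .
    qed
  qed
  have allE: "mem x" if "x \<in> E" for x
  proof -
    obtain v u where vu: "x = (v, u)" by (cases x)
    have "v \<in> V" using that vu EV by blast
    then have "(a, v) \<in> E\<^sup>*" using cg aV by (simp add: connected_graph_def)
    then show ?thesis using all vu that by (simp add: nbrs_def)
  qed
  obtain f1 where f1: "f1 \<in> faces E rot" "f1 \<notin> \<Phi>" using \<Phi>(1,3) by blast
  then obtain y where y: "y \<in> E" "orb y = f1" unfolding faces_def by blast
  have "mem y" by (rule allE[OF y(1)])
  then show False using y(2) f1(2) by (simp add: mem_def)
qed

end

context pgr
begin

lemma swapE: "x \<in> E \<Longrightarrow> prod.swap x \<in> E"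
  using symE by (cases x) auto

lemma lift:
  assumes Ene: "E \<noteq> {}"
    and euler: "card V + card (faces E rot) = card E div 2 + 2"
    and anti: "\<And>x. x \<in> E \<Longrightarrow> \<delta> (prod.swap x) = - \<delta> x"
    and fsum: "\<And>f. f \<in> faces E rot \<Longrightarrow> f \<noteq> F0 \<Longrightarrow> (\<Sum>x\<in>f. \<delta> x) = (0::int)"
  shows "\<exists>P. \<forall>x\<in>E. \<delta> x = P (snd x) - P (fst x)"
proof -
  have EE: "{x\<in>E. orb x \<in> faces E rot} = E" unfolding faces_def by blast
  have total: "(\<Sum>x\<in>E. \<delta> x) = 0"
  proof -
    have "{x\<in>E. prod.swap x \<in> E} = E" using swapE by blast
    then show ?thesis using sum_pairs_cancel[of E \<delta>, OF finE anti] by simp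
  qed
  have tot2: "(\<Sum>x\<in>E. \<delta> x) = (\<Sum>f\<in>faces E rot. \<Sum>x\<in>f. \<delta> x)"
    using sum_faces[of "faces E rot" \<delta>] unfolding EE by simp
  have fsum_all: "(\<Sum>x\<in>f. \<delta> x) = 0" if f: "f \<in> faces E rot" for f
  proof (cases "f = F0")
    case False then show ?thesis using fsum f by blast
  next
    case True
    have "(\<Sum>f\<in>faces E rot. \<Sum>x\<in>f. \<delta> x) = (\<Sum>x\<in>f. \<delta> x) + (\<Sum>g\<in>faces E rot - {f}. \<Sum>x\<in>g. \<delta> x)"
      by (rule sum.remove[OF faces_fin f])
    moreover have "(\<Sum>g\<in>faces E rot - {f}. \<Sum>x\<in>g. \<delta> x) = 0"
      using fsum True by (intro sum.neutral) blast
    ultimately show ?thesis using total tot2 by simp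
  qed
  define S where "S P = {x\<in>E. \<delta> x = P (snd x) - P (fst x)}" for P :: "'v \<Rightarrow> int"
  have SE: "S P \<subseteq> E" for P unfolding S_def by blast
  have Sfin: "finite (S P)" for P by (rule finite_subset[OF SE finE])
  have Slt: "card (S P) < card E + 1" for P using card_mono[OF finE SE[of P]] by simp
  obtain P where P: "\<And>P'. card (S P') \<le> card (S P)"
    using Lattices_Big.ex_has_greatest_nat[of "\<lambda>_. True" "\<lambda>_. 0" "\<lambda>P. card (S P)" "card E + 1"] Slt
    by blast
  have Ssym: "prod.swap x \<in> S P" if "x \<in> S P" for x
  proof -
    have xE: "x \<in> E" using that SE by blast
    then show ?thesis using that anti[OF xE] swapE[OF xE] by (cases x) (simp add: S_def)
  qed
  have Sspan: "(u, w) \<in> (S P)\<^sup>*" if uw: "u \<in> V" "w \<in> V" for u w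
  proof (rule ccontr)
    assume nuw: "(u, w) \<notin> (S P)\<^sup>*"
    define W where "W = {v. (u, v) \<in> (S P)\<^sup>*}"
    have "(u, w) \<in> E\<^sup>*" using cg uw by (simp add: connected_graph_def)
    moreover have "u \<in> W" "w \<notin> W" using nuw by (auto simp: W_def)
    ultimately have "\<exists>p q. (p, q) \<in> E \<and> p \<in> W \<and> q \<notin> W" by (rule crossing_step)
    then obtain v v' where vv: "(v, v') \<in> E" "v \<in> W" "v' \<notin> W" by blast
    define t where "t = \<delta> (v, v') - (P v' - P v)"
    define P' where "P' y = (if y \<in> W then P y else P y + t)" for y
    have sub: "S P \<subseteq> S P'"
    proof
      fix x assume x: "x \<in> S P"
      obtain p q where pq: "x = (p, q)" by (cases x)
      have "(p, q) \<in> S P" using x pq by simp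
      moreover have "(q, p) \<in> S P" using Ssym[OF x] pq by simp
      ultimately have "p \<in> W \<longleftrightarrow> q \<in> W" unfolding W_def
        using rtrancl_into_rtrancl[of u p "S P" q] rtrancl_into_rtrancl[of u q "S P" p] by blast
      then have "P' q - P' p = P q - P p" by (simp add: P'_def)
      then show "x \<in> S P'" using x pq by (simp add: S_def)
    qed
    have new: "(v, v') \<in> S P'" using vv by (simp add: S_def P'_def t_def)
    have old: "(v, v') \<notin> S P"
    proof
      assume "(v, v') \<in> S P"
      then have "v' \<in> W" using vv(2) rtrancl_into_rtrancl[of u v "S P" v'] unfolding W_def by blast
      then show False using vv(3) by simp
    qed
    have "S P \<subset> S P'" using sub new old by blast
    then have "card (S P) < card (S P')" by (rule psubset_card_mono[OF Sfin])
    then show False using P[of P'] by simp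
  qed
  define good where "good T \<longleftrightarrow> T \<subseteq> S P \<and> (\<forall>x\<in>T. prod.swap x \<in> T) \<and> (\<forall>u\<in>V. \<forall>w\<in>V. (u, w) \<in> T\<^sup>*)" for T
  have goodS: "good (S P)" unfolding good_def using Ssym Sspan by blast
  obtain T where T: "good T" and Tmin: "\<And>Tm. good Tm \<Longrightarrow> card T \<le> card Tm"
    using ex_has_least_nat[of good "S P" card] goodS by blast
  have TS: "T \<subseteq> S P" and Tsym: "\<And>x. x \<in> T \<Longrightarrow> prod.swap x \<in> T"
    and Tspan: "\<And>u w. u \<in> V \<Longrightarrow> w \<in> V \<Longrightarrow> (u, w) \<in> T\<^sup>*"
    using T unfolding good_def by blast+
  have TE: "T \<subseteq> E" using TS SE by blast
  have Tfin: "finite T" by (rule finite_subset[OF TE finE])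
  obtain v0 where v0: "v0 \<in> V" using cg by (auto simp: connected_graph_def)
  have cardT: "2 * (card V - 1) \<le> card T"
  proof (rule conn_card[where s = fst and t = snd and r = prod.swap and root = v0])
    show "finite V" by (rule finV)
    show "finite T" by (rule Tfin)
    show "\<And>x. x \<in> T \<Longrightarrow> prod.swap x \<in> T \<and> fst (prod.swap x) = snd x \<and> snd (prod.swap x) = fst x"
      using Tsym by simp
    show "v0 \<in> V" by (rule v0)
    have "{(fst x, snd x) |x. x \<in> T} = T" by auto
    then show "\<And>v. v \<in> V \<Longrightarrow> (v0, v) \<in> {(fst x, snd x) |x. x \<in> T}\<^sup>*" using Tspan v0 by simp
  qed
  define N where "N = E - T"
  define d where "d x = \<delta> x - (P (snd x) - P (fst x))" for x
  have dT: "d x = 0" if "x \<in> T" for x using that TS by (auto simp: S_def d_def)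
  have danti: "d (prod.swap x) = - d x" if "x \<in> E" for x
    using anti[OF that] by (cases x) (simp add: d_def)
  have dface: "(\<Sum>x\<in>f. d x) = 0" if f: "f \<in> faces E rot" for f
  proof -
    obtain y where y: "y \<in> E" "f = orb y" using f unfolding faces_def by blast
    have "(\<Sum>x\<in>f. d x) = (\<Sum>x\<in>f. \<delta> x) - (\<Sum>x\<in>f. P (snd x) - P (fst x))"
      unfolding d_def by (rule sum_subtractf)
    also have "(\<Sum>x\<in>f. P (snd x) - P (fst x)) = 0" using telescope[OF y(1)] y(2) by simp
    finally show ?thesis using fsum_all[OF f] by simp
  qed
  have Nsub: "N \<subseteq> E" unfolding N_def by blast
  have Nfin: "finite N" by (rule finite_subset[OF Nsub finE])
  have Nsym: "prod.swap x \<in> N" if "x \<in> N" for x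
  proof -
    have "x \<in> E" "x \<notin> T" using that unfolding N_def by blast+
    moreover have "prod.swap x \<notin> T"
    proof
      assume "prod.swap x \<in> T"
      then have "prod.swap (prod.swap x) \<in> T" by (rule Tsym)
      then show False using \<open>x \<notin> T\<close> by simp
    qed
    ultimately show ?thesis using swapE unfolding N_def by blast
  qed
  have claimC: "\<exists>x\<in>N. orb x \<in> \<Phi> \<and> orb (prod.swap x) \<notin> \<Phi>"
    if \<Phi>: "\<Phi> \<subseteq> faces E rot" "\<Phi> \<noteq> {}" "\<Phi> \<noteq> faces E rot" for \<Phi>
  proof (rule ccontr)
    assume nc: "\<not> (\<exists>x\<in>N. orb x \<in> \<Phi> \<and> orb (prod.swap x) \<notin> \<Phi>)"
    obtain e where e: "e \<in> E" "orb e \<in> \<Phi>" "orb (prod.swap e) \<notin> \<Phi>"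
      using cut_exists[OF \<Phi>] by blast
    have eT: "e \<in> T" using nc e unfolding N_def by blast
    define Tm where "Tm = T - {e, prod.swap e}"
    have Tmsym: "prod.swap x \<in> Tm" if "x \<in> Tm" for x
    proof -
      have "x \<in> T" "x \<noteq> e" "x \<noteq> prod.swap e" using that unfolding Tm_def by blast+
      then have "prod.swap x \<in> T" "prod.swap x \<noteq> e" "prod.swap x \<noteq> prod.swap e"
        using Tsym[of x] by (metis swap_swap)+
      then show ?thesis unfolding Tm_def by blast
    qed
    have Tmsym2: "(q, p) \<in> Tm" if "(p, q) \<in> Tm" for p q using Tmsym[OF that] by simp
    have notpath: "(fst e, snd e) \<notin> Tm\<^sup>*"
    proof
      assume path: "(fst e, snd e) \<in> Tm\<^sup>*"
      have bk: "(snd e, fst e) \<in> Tm\<^sup>*" by (rule rtrancl_sym[OF Tmsym2 path])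
      have "T \<subseteq> Tm\<^sup>*"
      proof
        fix x assume x: "x \<in> T"
        show "x \<in> Tm\<^sup>*"
        proof (cases "x = e")
          case True then show ?thesis using path by simp
        next
          case False
          show ?thesis
          proof (cases "x = prod.swap e")
            case True then show ?thesis using bk by (cases e) simp
          next
            case False
            then have "x \<in> Tm" using x \<open>x \<noteq> e\<close> unfolding Tm_def by blast
            then show ?thesis by blast
          qed
        qed
      qed
      then have TTm: "T\<^sup>* \<subseteq> Tm\<^sup>*" by (rule rtrancl_subset_rtrancl)
      have "good Tm" unfolding good_def
      proof (intro conjI ballI)
        show "Tm \<subseteq> S P" using TS unfolding Tm_def by blast
        show "prod.swap x \<in> Tm" if "x \<in> Tm" for x using Tmsym[OF that] .
        show "(u, w) \<in> Tm\<^sup>*" if "u \<in> V" "w \<in> V" for u w using Tspan[OF that] TTm by blast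
      qed
      then have "card T \<le> card Tm" by (rule Tmin)
      moreover have "card Tm < card T"
      proof (rule psubset_card_mono[OF Tfin])
        show "Tm \<subset> T" unfolding Tm_def using eT by blast
      qed
      ultimately show False by simp
    qed
    define W where "W = {v. (fst e, v) \<in> Tm\<^sup>*}"
    define Q where "Q v = (if v \<in> W then 1 else (0::int))" for v
    define \<chi> where "\<chi> x = Q (snd x) - Q (fst x)" for x
    have \<chi>Tm: "\<chi> x = 0" if x: "x \<in> Tm" for x
    proof -
      obtain p q where pq: "x = (p, q)" by (cases x)
      have "(p, q) \<in> Tm" "(q, p) \<in> Tm" using x pq Tmsym2 by auto
      then have "p \<in> W \<longleftrightarrow> q \<in> W" unfolding W_def
        using rtrancl_into_rtrancl[of "fst e" p Tm q] rtrancl_into_rtrancl[of "fst e" q Tm p] by blast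
      then show ?thesis using pq by (simp add: \<chi>_def Q_def)
    qed
    have \<chi>e: "\<chi> e = -1" using notpath by (simp add: \<chi>_def Q_def W_def)
    have \<chi>anti: "\<chi> (prod.swap x) = - \<chi> x" for x by (cases x) (simp add: \<chi>_def)
    define A where "A = {x\<in>E. orb x \<in> \<Phi>}"
    have Afin: "finite A" unfolding A_def using finE by simp
    have "(\<Sum>x\<in>A. \<chi> x) = (\<Sum>f\<in>\<Phi>. \<Sum>x\<in>f. \<chi> x)" unfolding A_def by (rule sum_faces[OF \<Phi>(1)])
    also have "\<dots> = 0"
    proof (rule sum.neutral, rule ballI)
      fix f assume "f \<in> \<Phi>"
      then obtain y where y: "y \<in> E" "f = orb y" using \<Phi>(1) unfolding faces_def by blast
      show "(\<Sum>x\<in>f. \<chi> x) = 0" unfolding y(2) \<chi>_def by (rule telescope[OF y(1)])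
    qed
    finally have s0: "(\<Sum>x\<in>A. \<chi> x) = 0" .
    have s1: "(\<Sum>x\<in>A. \<chi> x) = (\<Sum>x\<in>{x\<in>A. prod.swap x \<notin> A}. \<chi> x)"
      by (rule sum_crossing[OF Afin]) (simp add: \<chi>anti)
    have eC: "e \<in> {x\<in>A. prod.swap x \<notin> A}" using e unfolding A_def by simp
    have others: "\<chi> x = 0" if x: "x \<in> {x\<in>A. prod.swap x \<notin> A}" "x \<noteq> e" for x
    proof -
      have xE: "x \<in> E" "orb x \<in> \<Phi>" using x unfolding A_def by blast+
      have "orb (prod.swap x) \<notin> \<Phi>" using x swapE[OF xE(1)] unfolding A_def by blast
      then have "x \<notin> N" using nc xE by blast
      then have "x \<in> T" using xE unfolding N_def by blast
      moreover have "x \<noteq> prod.swap e"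
      proof
        assume "x = prod.swap e"
        then have "prod.swap x = e" by simp
        then show False using x e unfolding A_def by simp
      qed
      ultimately have "x \<in> Tm" using x(2) unfolding Tm_def by blast
      then show ?thesis by (rule \<chi>Tm)
    qed
    have "(\<Sum>x\<in>{x\<in>A. prod.swap x \<notin> A}. \<chi> x) = \<chi> e"
      by (rule sum_single_nz) (use Afin eC others in auto)
    then show False using s0 s1 \<chi>e by simp
  qed
  have Fne: "faces E rot \<noteq> {}" using Ene unfolding faces_def by blast
  obtain f0 where f0: "f0 \<in> faces E rot" using Fne by blast
  define RN where "RN = {(orb x, orb (prod.swap x)) | x. x \<in> N}"
  have dconn: "(f0, f) \<in> RN\<^sup>*" if f: "f \<in> faces E rot" for f
  proof (rule ccontr)
    assume nf: "(f0, f) \<notin> RN\<^sup>*"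
    define \<Phi> where "\<Phi> = {g \<in> faces E rot. (f0, g) \<in> RN\<^sup>*}"
    have "\<Phi> \<subseteq> faces E rot" "\<Phi> \<noteq> {}" "\<Phi> \<noteq> faces E rot" using f0 f nf unfolding \<Phi>_def by auto
    then obtain x where x: "x \<in> N" "orb x \<in> \<Phi>" "orb (prod.swap x) \<notin> \<Phi>" using claimC by blast
    have "(orb x, orb (prod.swap x)) \<in> RN" using x(1) unfolding RN_def by blast
    moreover have "(f0, orb x) \<in> RN\<^sup>*" using x(2) unfolding \<Phi>_def by blast
    ultimately have "(f0, orb (prod.swap x)) \<in> RN\<^sup>*" by (rule rtrancl_into_rtrancl[rotated])
    moreover have "orb (prod.swap x) \<in> faces E rot"
      using swapE x(1) Nsub unfolding faces_def by blast
    ultimately show False using x(3) unfolding \<Phi>_def by blast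
  qed
  have evenE: "even (card E)"
  proof (rule even_card_sym[OF finE])
    show "\<And>u w. (u, w) \<in> E \<Longrightarrow> (w, u) \<in> E" by (rule symE)
    show "\<And>u. (u, u) \<notin> E" by (rule irrE)
  qed
  have cardE: "card E = card T + card N"
    unfolding N_def using card_Diff_subset[OF Tfin TE] card_mono[OF finE TE] by simp
  have "card V > 0" by (subst card_gt_0_iff) (use finV v0 in blast)
  then have V1: "card V \<ge> 1" by simp
  have cardN: "card N \<le> 2 * (card (faces E rot) - 1)"
  proof -
    have "card E = 2 * (card E div 2)" using evenE by simp
    then show ?thesis using euler cardT cardE V1 by linarith
  qed
  have dN: "d x0 = 0" if x0: "x0 \<in> N" for x0
  proof -
    have x0E: "x0 \<in> E" using x0 Nsub by blast
    have sx0: "prod.swap x0 \<in> N" by (rule Nsym[OF x0])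
    have neq: "prod.swap x0 \<noteq> x0" using x0E irrE by (cases x0) auto
    define Nm where "Nm = N - {x0, prod.swap x0}"
    have Nmfin: "finite Nm" using Nfin unfolding Nm_def by simp
    have cardNm: "card Nm + 2 = card N"
    proof -
      have sub: "{x0, prod.swap x0} \<subseteq> N" using x0 sx0 by blast
      have "card {x0, prod.swap x0} = 2" using neq by simp
      then show ?thesis unfolding Nm_def using card_Diff_subset[OF _ sub] card_mono[OF Nfin sub] by simp
    qed
    define Rm where "Rm = {(orb x, orb (prod.swap x)) | x. x \<in> Nm}"
    have Nmsym: "prod.swap x \<in> Nm" if "x \<in> Nm" for x
    proof -
      have "x \<in> N" "x \<noteq> x0" "x \<noteq> prod.swap x0" using that unfolding Nm_def by blast+
      then have "prod.swap x \<in> N" "prod.swap x \<noteq> x0" "prod.swap x \<noteq> prod.swap x0"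
        using Nsym[of x] by (metis swap_swap)+
      then show ?thesis unfolding Nm_def by blast
    qed
    have Rmsym: "(q, p) \<in> Rm" if pq: "(p, q) \<in> Rm" for p q
    proof -
      obtain x where "x \<in> Nm" "p = orb x" "q = orb (prod.swap x)" using pq unfolding Rm_def by blast
      have "prod.swap x \<in> Nm" by (rule Nmsym) fact
      then have "(orb (prod.swap x), orb (prod.swap (prod.swap x))) \<in> Rm" unfolding Rm_def by blast
      then show ?thesis using \<open>p = orb x\<close> \<open>q = orb (prod.swap x)\<close> by simp
    qed
    define a where "a = orb x0"
    define b where "b = orb (prod.swap x0)"
    have aF: "a \<in> faces E rot" using x0E unfolding a_def faces_def by blast
    have bF: "b \<in> faces E rot" using swapE[OF x0E] unfolding b_def faces_def by blast
    have nab: "(a, b) \<notin> Rm\<^sup>*"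
    proof
      assume ab: "(a, b) \<in> Rm\<^sup>*"
      have ba: "(b, a) \<in> Rm\<^sup>*" by (rule rtrancl_sym[OF Rmsym ab])
      have "RN \<subseteq> Rm\<^sup>*"
      proof
        fix z assume "z \<in> RN"
        then obtain x where x: "x \<in> N" "z = (orb x, orb (prod.swap x))" unfolding RN_def by blast
        show "z \<in> Rm\<^sup>*"
        proof (cases "x = x0")
          case True then show ?thesis using x ab unfolding a_def b_def by simp
        next
          case False
          show ?thesis
          proof (cases "x = prod.swap x0")
            case True then show ?thesis using x ba unfolding a_def b_def by simp
          next
            case False
            then have "x \<in> Nm" using x(1) \<open>x \<noteq> x0\<close> unfolding Nm_def by blast
            then have "z \<in> Rm" using x(2) unfolding Rm_def by blast
            then show ?thesis by blast
          qed
        qed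
      qed
      then have "RN\<^sup>* \<subseteq> Rm\<^sup>*" by (rule rtrancl_subset_rtrancl)
      then have conn': "(f0, f) \<in> Rm\<^sup>*" if "f \<in> faces E rot" for f
        using dconn[OF that] by (rule subsetD)
      have "2 * (card (faces E rot) - 1) \<le> card Nm"
      proof (rule conn_card[where s = orb and t = "\<lambda>x. orb (prod.swap x)" and r = prod.swap and root = f0])
        show "finite (faces E rot)" by (rule faces_fin)
        show "finite Nm" by (rule Nmfin)
        show "\<And>x. x \<in> Nm \<Longrightarrow> prod.swap x \<in> Nm \<and> orb (prod.swap x) = orb (prod.swap x) \<and> orb (prod.swap (prod.swap x)) = orb x"
          using Nmsym by simp
        show "f0 \<in> faces E rot" by (rule f0)
        show "\<And>v. v \<in> faces E rot \<Longrightarrow> (f0, v) \<in> {(orb x, orb (prod.swap x)) |x. x \<in> Nm}\<^sup>*"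
          by (rule conn'[unfolded Rm_def])
      qed
      then show False using cardN cardNm by simp
    qed
    define \<Phi> where "\<Phi> = {g \<in> faces E rot. (a, g) \<in> Rm\<^sup>*}"
    have \<Phi>F: "\<Phi> \<subseteq> faces E rot" unfolding \<Phi>_def by blast
    define A where "A = {x\<in>E. orb x \<in> \<Phi>}"
    have Afin: "finite A" unfolding A_def using finE by simp
    have "(\<Sum>x\<in>A. d x) = (\<Sum>f\<in>\<Phi>. \<Sum>x\<in>f. d x)" unfolding A_def by (rule sum_faces[OF \<Phi>F])
    also have "\<dots> = 0" using dface \<Phi>F by (intro sum.neutral) blast
    finally have s0: "(\<Sum>x\<in>A. d x) = 0" .
    have s1: "(\<Sum>x\<in>A. d x) = (\<Sum>x\<in>{x\<in>A. prod.swap x \<notin> A}. d x)"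
      by (rule sum_crossing[OF Afin]) (simp add: A_def danti)
    have bnot: "b \<notin> \<Phi>" using nab unfolding \<Phi>_def by blast
    have "a \<in> \<Phi>" using aF unfolding \<Phi>_def by simp
    then have x0A: "x0 \<in> A" using x0E unfolding A_def a_def by simp
    have "prod.swap x0 \<notin> A" using bnot unfolding A_def b_def by simp
    then have x0C: "x0 \<in> {x\<in>A. prod.swap x \<notin> A}" using x0A by simp
    have others: "d x = 0" if x: "x \<in> {x\<in>A. prod.swap x \<notin> A}" "x \<noteq> x0" for x
    proof -
      have xE: "x \<in> E" "orb x \<in> \<Phi>" using x unfolding A_def by blast+
      have no: "orb (prod.swap x) \<notin> \<Phi>" using x swapE[OF xE(1)] unfolding A_def by blast
      have "x \<notin> Nm"
      proof
        assume "x \<in> Nm"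
        then have "(orb x, orb (prod.swap x)) \<in> Rm" unfolding Rm_def by blast
        moreover have "(a, orb x) \<in> Rm\<^sup>*" using xE(2) unfolding \<Phi>_def by blast
        ultimately have "(a, orb (prod.swap x)) \<in> Rm\<^sup>*" by (rule rtrancl_into_rtrancl[rotated])
        moreover have "orb (prod.swap x) \<in> faces E rot" using swapE[OF xE(1)] unfolding faces_def by blast
        ultimately show False using no unfolding \<Phi>_def by blast
      qed
      moreover have "x \<noteq> prod.swap x0"
      proof
        assume "x = prod.swap x0"
        then have "orb x = b" unfolding b_def by simp
        then show False using xE(2) bnot by simp
      qed
      ultimately have "x \<in> T" using xE(1) x(2) unfolding Nm_def N_def by blast
      then show ?thesis by (rule dT)
    qed
    have "(\<Sum>x\<in>{x\<in>A. prod.swap x \<notin> A}. d x) = d x0"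
      by (rule sum_single_nz) (use Afin x0C others in auto)
    then show ?thesis using s0 s1 by simp
  qed
  show ?thesis
  proof (intro exI ballI)
    fix x assume x: "x \<in> E"
    have "d x = 0"
    proof (cases "x \<in> T")
      case True then show ?thesis by (rule dT)
    next
      case False then show ?thesis using x dN unfolding N_def by blast
    qed
    then show "\<delta> x = P (snd x) - P (fst x)" by (simp add: d_def)
  qed
qed

end

lemma of_int3: "(of_int a :: 3) = of_int b \<longleftrightarrow> (a - b) mod 3 = 0"
proof -
  have "(of_int a :: 3) = of_int b \<longleftrightarrow> (of_int (a - b) :: 3) = 0" by simp
  also have "\<dots> \<longleftrightarrow> int CHAR(3) dvd (a - b)" by (rule of_int_eq_0_iff_char_dvd)
  finally show ?thesis by (simp add: dvd_eq_mod_eq_0)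
qed
lemma of_int2: "(of_int a :: 2) = of_int b \<longleftrightarrow> (a - b) mod 2 = 0"
proof -
  have "(of_int a :: 2) = of_int b \<longleftrightarrow> (of_int (a - b) :: 2) = 0" by simp
  also have "\<dots> \<longleftrightarrow> int CHAR(2) dvd (a - b)" by (rule of_int_eq_0_iff_char_dvd)
  finally show ?thesis by (simp add: dvd_eq_mod_eq_0)
qed

definition dirf :: "3 \<Rightarrow> 3 \<Rightarrow> 2 \<times> 2 \<Rightarrow> 2 \<times> 2 \<Rightarrow> int \<times> int" where
  "dirf hu hw cu cw = (if hw - hu = 1 then
      (if fst cw - fst cu = 1 \<and> snd cw - snd cu = 0 then (1, 0)
       else if fst cw - fst cu = 0 \<and> snd cw - snd cu = 1 then (0, 1) else (-1, -1))
    else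
      (if fst cw - fst cu = 1 \<and> snd cw - snd cu = 0 then (-1, 0)
       else if fst cw - fst cu = 0 \<and> snd cw - snd cu = 1 then (0, -1) else (1, 1)))"

lemma ex3: "(x::3) = 0 \<or> x = 1 \<or> x = 2"
proof (cases x)
  case (of_int z)
  then have "z = 0 \<or> z = 1 \<or> z = 2" by auto
  then show ?thesis using of_int by auto
qed
lemma ex2: "(x::2) = 0 \<or> x = 1"
proof (cases x)
  case (of_int z)
  then have "z = 0 \<or> z = 1" by auto
  then show ?thesis using of_int by auto
qed
lemma all3: "(\<forall>x::3. P x) \<longleftrightarrow> P 0 \<and> P 1 \<and> P 2" by (metis ex3)
lemma all2: "(\<forall>x::2. P x) \<longleftrightarrow> P 0 \<and> P 1" by (metis ex2)
lemma all22: "(\<forall>x::2\<times>2. P x) \<longleftrightarrow> P (0,0) \<and> P (0,1) \<and> P (1,0) \<and> P (1,1)"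
proof (intro iffI allI)
  assume "\<forall>x. P x" then show "P (0,0) \<and> P (0,1) \<and> P (1,0) \<and> P (1,1)" by blast
next
  fix x :: "2 \<times> 2" assume H: "P (0,0) \<and> P (0,1) \<and> P (1,0) \<and> P (1,1)"
  obtain a b where x: "x = (a, b)" by (cases x)
  show "P x" using ex2[of a] ex2[of b] H x by auto
qed

lemma dirf_anti_all: "\<forall>hu hw :: 3. \<forall>cu cw :: 2\<times>2. hu \<noteq> hw \<longrightarrow> cu \<noteq> cw \<longrightarrow>
   fst (dirf hw hu cw cu) = - fst (dirf hu hw cu cw) \<and> snd (dirf hw hu cw cu) = - snd (dirf hu hw cu cw)"
  unfolding all3 all22 by (simp add: dirf_def)

lemma dirf_tri_all: "\<forall>hu hw hx :: 3. \<forall>cu cw cx :: 2\<times>2. hu \<noteq> hw \<longrightarrow> hw \<noteq> hx \<longrightarrow> hx \<noteq> hu \<longrightarrow>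
   cu \<noteq> cw \<longrightarrow> cw \<noteq> cx \<longrightarrow> cx \<noteq> cu \<longrightarrow>
   fst (dirf hu hw cu cw) + fst (dirf hw hx cw cx) + fst (dirf hx hu cx cu) = 0 \<and>
   snd (dirf hu hw cu cw) + snd (dirf hw hx cw cx) + snd (dirf hx hu cx cu) = 0"
  unfolding all3 all22 by (simp add: dirf_def)
lemma dirf_hue_all: "\<forall>hu hw :: 3. \<forall>cu cw :: 2\<times>2. hu \<noteq> hw \<longrightarrow> cu \<noteq> cw \<longrightarrow>
   (of_int (fst (dirf hu hw cu cw) + snd (dirf hu hw cu cw)) :: 3) = hw - hu \<and>
   (of_int (fst (dirf hu hw cu cw)) :: 2) = fst cw - fst cu \<and>
   (of_int (snd (dirf hu hw cu cw)) :: 2) = snd cw - snd cu"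
  unfolding all3 all22 by (simp add: dirf_def)

lemma dirf_anti: "hu \<noteq> hw \<Longrightarrow> cu \<noteq> cw \<Longrightarrow>
   fst (dirf hw hu cw cu) = - fst (dirf hu hw cu cw) \<and> snd (dirf hw hu cw cu) = - snd (dirf hu hw cu cw)"
  using dirf_anti_all by blast

lemma dirf_tri: "hu \<noteq> hw \<Longrightarrow> hw \<noteq> hx \<Longrightarrow> hx \<noteq> hu \<Longrightarrow>
   cu \<noteq> cw \<Longrightarrow> cw \<noteq> cx \<Longrightarrow> cx \<noteq> cu \<Longrightarrow>
   fst (dirf hu hw cu cw) + fst (dirf hw hx cw cx) + fst (dirf hx hu cx cu) = 0 \<and>
   snd (dirf hu hw cu cw) + snd (dirf hw hx cw cx) + snd (dirf hx hu cx cu) = 0"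
  using dirf_tri_all by blast

lemma dirf_hue: "hu \<noteq> hw \<Longrightarrow> cu \<noteq> cw \<Longrightarrow>
   (of_int (fst (dirf hu hw cu cw) + snd (dirf hu hw cu cw)) :: 3) = hw - hu \<and>
   (of_int (fst (dirf hu hw cu cw)) :: 2) = fst cw - fst cu \<and>
   (of_int (snd (dirf hu hw cu cw)) :: 2) = snd cw - snd cu"
  using dirf_hue_all by blast

definition six :: "(int \<times> int) set" where
  "six = {(1, 0), (-1, 0), (0, 1), (0, -1), (1, 1), (-1, -1)}"

lemma dirf_six: "dirf hu hw cu cw \<in> six" by (simp add: dirf_def six_def)

lemma T_adj_six: "T_adj p q \<longleftrightarrow> (fst q - fst p, snd q - snd p) \<in> six"
  by (simp add: T_adj_def six_def)

lemma dir_T: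
  assumes "T_adj p q"
  shows "(fst q - fst p, snd q - snd p) = dirf (T_hue p) (T_hue q) (T_color p) (T_color q)"
proof -
  obtain i j where p: "p = (i, j)" by (cases p)
  obtain a b where ab: "(a, b) \<in> six" "q = (i + a, j + b)"
    using assms p unfolding T_adj_six by (cases q) force
  show ?thesis using ab(1) unfolding ab(2) p six_def
    by (auto simp: dirf_def T_hue_def T_color_def)
qed

lemma six_hue: "(a, b) \<in> six \<Longrightarrow> T_hue (i + a, j + b) \<noteq> T_hue (i, j) \<and> T_color (i + a, j + b) \<noteq> T_color (i, j)"
  unfolding six_def by (auto simp: T_hue_def T_color_def)

definition sig :: "int \<Rightarrow> int \<Rightarrow> int \<times> int" where
  "sig i j = (if (i + j) mod 3 = 1 then
      (if 0 \<le> i \<and> j \<le> i then (1, 0) else if 0 \<le> j \<and> i \<le> j then (0, 1) else (1, 1))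
    else
      (if 0 \<le> i \<and> 0 \<le> j then (1, 1) else if i \<le> 0 \<and> i \<le> j then (1, 0) else (0, 1)))"

definition S3 :: "(int \<times> int) set" where "S3 = {(1, 0), (0, 1), (1, 1)}"

lemma sig_S3: "sig i j \<in> S3" by (simp add: sig_def S3_def)

lemma sp1: assumes "(i + j) mod 3 = 1" shows "sig i j \<noteq> sig (i + 1) j"
proof -
  have m: "(i + 1 + j) mod 3 = 2" using assms by presburger
  show ?thesis using assms m unfolding sig_def by (auto split: if_splits)
qed
lemma sp2: assumes "(i + j) mod 3 = 1" shows "sig i j \<noteq> sig i (j + 1)"
proof -
  have m: "(i + (j + 1)) mod 3 = 2" using assms by presburger
  show ?thesis using assms m unfolding sig_def by (auto split: if_splits)
qed
lemma sp3: assumes "(i + j) mod 3 = 1" shows "sig i j \<noteq> sig (i - 1) (j - 1)"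
proof -
  have m: "(i - 1 + (j - 1)) mod 3 = 2" using assms by presburger
  show ?thesis using assms m unfolding sig_def by (auto split: if_splits)
qed

lemma sig_proper:
  assumes h1: "(i + j) mod 3 \<noteq> 0" and h2: "(i + a + (j + b)) mod 3 \<noteq> 0" and d: "(a, b) \<in> six"
  shows "sig i j \<noteq> sig (i + a) (j + b)"
proof -
  from d consider "a = 1 \<and> b = 0" | "a = -1 \<and> b = 0" | "a = 0 \<and> b = 1" | "a = 0 \<and> b = -1"
    | "a = 1 \<and> b = 1" | "a = -1 \<and> b = -1" unfolding six_def by auto
  then show ?thesis
  proof cases
    case 1
    then have "(i + j) mod 3 = 1" using h1 h2 by presburger
    then show ?thesis using sp1[of i j] 1 by simp
  next
    case 2
    then have "(i - 1 + j) mod 3 = 1" using h1 h2 by presburger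
    then have "sig (i - 1) j \<noteq> sig (i - 1 + 1) j" by (rule sp1)
    then show ?thesis using 2 by simp
  next
    case 3
    then have "(i + j) mod 3 = 1" using h1 h2 by presburger
    then show ?thesis using sp2[of i j] 3 by simp
  next
    case 4
    then have "(i + (j - 1)) mod 3 = 1" using h1 h2 by presburger
    then have "sig i (j - 1) \<noteq> sig i (j - 1 + 1)" by (rule sp2)
    then show ?thesis using 4 by simp
  next
    case 5
    then have "(i + 1 + (j + 1)) mod 3 = 1" using h1 h2 by presburger
    then have "sig (i + 1) (j + 1) \<noteq> sig (i + 1 - 1) (j + 1 - 1)" by (rule sp3)
    then show ?thesis using 5 by simp
  next
    case 6
    then have "(i + j) mod 3 = 1" using h1 h2 by presburger
    then show ?thesis using sp3[of i j] 6 by simp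
  qed
qed

lemma S3_col: "s \<in> S3 \<Longrightarrow> T_color (i + fst s, j + snd s) \<noteq> T_color (i, j)"
  unfolding S3_def by (auto simp: T_color_def)

lemma S3_col_inj: "s \<in> S3 \<Longrightarrow> s' \<in> S3 \<Longrightarrow> s \<noteq> s' \<Longrightarrow>
    T_color (i + fst s, j + snd s) \<noteq> T_color (i + fst s', j + snd s')"
  unfolding S3_def by (auto simp: T_color_def)

lemma sig_six: "(a, b) \<in> six \<Longrightarrow> T_color (i + fst (sig a b), j + snd (sig a b)) = T_color (i + a, j + b)"
  unfolding six_def by (auto simp: sig_def T_color_def)

lemma hue_mod: "T_hue p \<noteq> T_hue z \<Longrightarrow> ((fst p - fst z) + (snd p - snd z)) mod 3 \<noteq> 0"
  unfolding T_hue_def of_int3 by (simp add: algebra_simps)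


context pgr
begin

lemma triangle:
  assumes x: "x \<in> E" and c3: "card (orb x) = 3"
  shows "orb x = {x, stp x, stp (stp x)} \<and> x \<noteq> stp x \<and> stp x \<noteq> stp (stp x) \<and> x \<noteq> stp (stp x)
         \<and> stp (stp (stp x)) = x"
proof -
  let ?a = x and ?b = "stp x" and ?c = "stp (stp x)"
  have bE: "?b \<in> E" using stp_E[OF x] .
  have cE: "?c \<in> E" using stp_E[OF bE] .
  have ab: "?a \<noteq> ?b"
  proof
    assume eq: "?a = ?b"
    have "(stp ^^ n) x = x" for n
    proof (induction n)
      case 0 then show ?case by simp
    next
      case (Suc n) then show ?case using eq by simp
    qed
    then have "orb x \<subseteq> {x}"
    proof -
      assume H: "\<And>n. (stp ^^ n) x = x"
      show "orb x \<subseteq> {x}"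
      proof
        fix z assume "z \<in> orb x"
        then obtain n where "z = (stp ^^ n) x" unfolding orb_iff by blast
        then show "z \<in> {x}" using H[of n] by simp
      qed
    qed
    then have "card (orb x) \<le> 1" using card_mono[of "{x}" "orb x"] by simp
    then show False using c3 by simp
  qed
  have bc: "?b \<noteq> ?c"
  proof
    assume "?b = ?c"
    then have "?a = ?b" using stp_inj x bE by (metis inj_onD)
    then show False using ab by simp
  qed
  have ac: "?a \<noteq> ?c"
  proof
    assume eq: "?a = ?c"
    have "(stp ^^ n) x \<in> {?a, ?b}" for n
    proof (induction n)
      case 0 then show ?case by simp
    next
      case (Suc n)
      then have "(stp ^^ n) x = ?a \<or> (stp ^^ n) x = ?b" by simp
      then show ?case using eq by auto
    qed
    then have "orb x \<subseteq> {?a, ?b}"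
    proof -
      assume H: "\<And>n. (stp ^^ n) x \<in> {?a, ?b}"
      show "orb x \<subseteq> {?a, ?b}"
      proof
        fix z assume "z \<in> orb x"
        then obtain n where "z = (stp ^^ n) x" unfolding orb_iff by blast
        then show "z \<in> {?a, ?b}" using H[of n] by simp
      qed
    qed
    then have "card (orb x) \<le> card {?a, ?b}" by (intro card_mono) auto
    moreover have "card {?a, ?b} \<le> 2" by (simp add: card_insert_if)
    ultimately have "card (orb x) \<le> 2" by simp
    then show False using c3 by simp
  qed
  have sub: "{?a, ?b, ?c} \<subseteq> orb x" using orb_self orb_stp by blast
  have "card {?a, ?b, ?c} = 3" using ab bc ac by simp
  then have eqo: "{?a, ?b, ?c} = orb x" using card_subset_eq[OF orb_fin[OF x] sub] c3 by simp
  have "stp ?c \<in> orb x" using orb_stp sub by blast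
  then have "stp ?c \<in> {?a, ?b, ?c}" using eqo by simp
  moreover have "stp ?c \<noteq> ?b"
  proof
    assume "stp ?c = ?b"
    then have "?c = ?a" using stp_inj x cE by (metis inj_onD)
    then show False using ac by simp
  qed
  moreover have "stp ?c \<noteq> ?c"
  proof
    assume "stp ?c = ?c"
    then have "?c = ?b" using stp_inj bE cE by (metis inj_onD)
    then show False using bc by simp
  qed
  ultimately have "stp ?c = ?a" by blast
  then show ?thesis using eqo ab bc ac by simp
qed

end


lemma adj_diff: "T_adj p q \<Longrightarrow> T_hue q \<noteq> T_hue p \<and> T_color q \<noteq> T_color p"
proof -
  assume "T_adj p q"
  then have d: "(fst q - fst p, snd q - snd p) \<in> six" by (simp add: T_adj_six)
  have e: "(fst p + (fst q - fst p), snd p + (snd q - snd p)) = q" by simp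
  have e2: "(fst p, snd p) = p" by simp
  show ?thesis using six_hue[OF d, of "fst p" "snd p"] unfolding e e2 .
qed

theorem corollary11:
  fixes V :: "'v set" and E :: "('v \<times> 'v) set" and rot :: "'v \<Rightarrow> 'v \<Rightarrow> 'v"
    and Out :: "('v \<times> 'v) set" and hue :: "'v \<Rightarrow> 3" and \<phi> :: "'v \<Rightarrow> 2 \<times> 2"
    and c :: 3 and k :: "2 \<times> 2"
  assumes "patch V E rot Out"
    and "proper_col V E hue"
    and "single_hexagon_coloring (bdry_V V Out) (bdry_E Out) hue \<phi> c k"
  defines "VH \<equiv> {v \<in> V. hue v \<noteq> c}"
  shows "(\<exists>g :: 'v \<Rightarrow> 2 \<times> 2. proper_col V E g \<and> (\<forall>v\<in>bdry_V V Out. g v = \<phi> v))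
     \<longleftrightarrow> (\<exists>h :: 'v \<Rightarrow> 2 \<times> 2. proper_col VH (E \<inter> (VH \<times> VH)) h \<and>
             (\<forall>v\<in>VH. h v \<in> UNIV - {k}) \<and>
             (\<forall>v\<in>VH \<inter> bdry_V V Out. h v = \<phi> v))"
proof -
  have pg: "plane_graph V E rot"
    and outc: "if E = {} then Out = {} else Out \<in> faces E rot \<and> (\<forall>F\<in>faces E rot. F \<noteq> Out \<longrightarrow> card F = 3)"
    using assms(1) unfolding patch_def by blast+
  have sg: "simple_graph V E" and cg: "connected_graph V E" and rs: "rotation_system V E rot"
    and eul: "E = {} \<or> card V + card (faces E rot) = card E div 2 + 2"
    using pg unfolding plane_graph_def by blast+
  interpret P: pgr V E rot by (unfold_locales) (fact sg, fact cg, fact rs)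
  have hueE: "hue u \<noteq> hue w" if "(u, w) \<in> E" for u w
    using assms(2) that unfolding proper_col_def by blast
  obtain f z where hom: "dappled_hom_T (bdry_V V Out) (bdry_E Out) hue \<phi> f"
    and img: "f ` bdry_V V Out \<subseteq> hexagon z" and hz: "T_hue z = c" and kz: "T_color z = k"
    using assms(3) unfolding single_hexagon_coloring_def by blast
  have fhc: "T_hue (f v) = hue v \<and> T_color (f v) = \<phi> v" if "v \<in> bdry_V V Out" for v
    using hom that unfolding dappled_hom_T_def by blast
  have fadj: "T_adj (f u) (f w)" if "(u, w) \<in> bdry_E Out" for u w
    using hom that unfolding dappled_hom_T_def by blast
  have hexv: "T_adj z (f v)" if v: "v \<in> bdry_V V Out" "hue v \<noteq> c" for v
  proof -
    have "f v \<in> hexagon z" using img v(1) by blast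
    moreover have "f v \<noteq> z" using fhc[OF v(1)] v(2) hz by auto
    ultimately show ?thesis unfolding hexagon_def by blast
  qed
  have hexk: "hue v = c \<longleftrightarrow> \<phi> v = k" if v: "v \<in> bdry_V V Out" for v
  proof
    assume hc: "hue v = c"
    have "f v \<in> hexagon z" using img v by blast
    moreover have "\<not> T_adj z (f v)" using adj_diff[of z "f v"] fhc[OF v] hc hz by auto
    ultimately have "f v = z" unfolding hexagon_def by blast
    then show "\<phi> v = k" using fhc[OF v] kz by simp
  next
    assume pk: "\<phi> v = k"
    show "hue v = c"
    proof (rule ccontr)
      assume "hue v \<noteq> c"
      then have "T_adj z (f v)" by (rule hexv[OF v])
      then show False using adj_diff[of z "f v"] fhc[OF v] pk kz by auto
    qed
  qed
  have bV: "bdry_V V Out \<subseteq> V"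
  proof (cases "E = {}")
    case True then show ?thesis using outc by (simp add: bdry_V_def)
  next
    case False
    then have "Out \<in> faces E rot" using outc by simp
    then obtain x0 where "x0 \<in> E" "Out = P.orb x0" unfolding faces_def by blast
    then have "Out \<subseteq> E" using P.orb_E by blast
    then show ?thesis using P.EV unfolding bdry_V_def by auto
  qed
  show ?thesis
  proof
    assume "\<exists>g :: 'v \<Rightarrow> 2 \<times> 2. proper_col V E g \<and> (\<forall>v\<in>bdry_V V Out. g v = \<phi> v)"
    then obtain g :: "'v \<Rightarrow> 2 \<times> 2" where gp: "proper_col V E g" and gb: "\<And>v. v \<in> bdry_V V Out \<Longrightarrow> g v = \<phi> v"
      by blast
    have gE: "g u \<noteq> g w" if "(u, w) \<in> E" for u w using gp that unfolding proper_col_def by blast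
    show "\<exists>h :: 'v \<Rightarrow> 2 \<times> 2. proper_col VH (E \<inter> (VH \<times> VH)) h \<and>
             (\<forall>v\<in>VH. h v \<in> UNIV - {k}) \<and> (\<forall>v\<in>VH \<inter> bdry_V V Out. h v = \<phi> v)"
    proof (cases "E = {}")
      case True
      then have bd: "bdry_V V Out = V" using outc by (simp add: bdry_V_def)
      show ?thesis
      proof (intro exI conjI ballI)
        show "proper_col VH (E \<inter> (VH \<times> VH)) \<phi>" using True by (simp add: proper_col_def)
        show "\<phi> v \<in> UNIV - {k}" if "v \<in> VH" for v
          using that hexk[of v] bd unfolding VH_def by auto
        show "\<phi> v = \<phi> v" for v by simp
      qed
    next
      case False
      have Outf: "Out \<in> faces E rot" and tri3: "\<And>F. F \<in> faces E rot \<Longrightarrow> F \<noteq> Out \<Longrightarrow> card F = 3"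
        using outc False by auto
      have eul': "card V + card (faces E rot) = card E div 2 + 2" using eul False by simp
      obtain x0 where x0: "x0 \<in> E" "Out = P.orb x0" using Outf unfolding faces_def by blast
      have x0O: "x0 \<in> Out" using x0 P.orb_self by simp
      have bdryV: "bdry_V V Out = fst ` Out" using x0O by (auto simp: bdry_V_def)
      have OutE: "Out \<subseteq> E" using x0 P.orb_E by blast
      have OutbE: "y \<in> bdry_E Out" if "y \<in> Out" for y using that by (simp add: bdry_E_def)
      define D where "D x = dirf (hue (fst x)) (hue (snd x)) (g (fst x)) (g (snd x))" for x
      have Danti: "fst (D (prod.swap x)) = - fst (D x) \<and> snd (D (prod.swap x)) = - snd (D x)"
        if x: "x \<in> E" for x
      proof -
        obtain u w where uw: "x = (u, w)" by (cases x)
        have "(u, w) \<in> E" using x uw by simp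
        then have h1: "hue u \<noteq> hue w" and h2: "g u \<noteq> g w" using hueE gE by blast+
        show ?thesis using dirf_anti[OF h1 h2] uw unfolding D_def by simp
      qed
      have Dtri: "(\<Sum>x\<in>F. fst (D x)) = 0 \<and> (\<Sum>x\<in>F. snd (D x)) = 0"
        if F: "F \<in> faces E rot" "F \<noteq> Out" for F
      proof -
        obtain y where y: "y \<in> E" "F = P.orb y" using F(1) unfolding faces_def by blast
        have c3: "card (P.orb y) = 3" using tri3[OF F] y by simp
        note tr = P.triangle[OF y(1) c3]
        obtain a b where y': "y = (a, b)" by (cases y)
        define c' where "c' = rot b a"
        have s1: "P.stp (a, b) = (b, c')" unfolding c'_def by (rule P.stp_def2)
        have s2a: "P.stp (b, c') = (c', rot c' b)" by (rule P.stp_def2)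
        have s3a: "P.stp (c', rot c' b) = (rot c' b, rot (rot c' b) c')" by (rule P.stp_def2)
        have "P.stp (P.stp (P.stp (a, b))) = (a, b)" using tr y' by simp
        then have "rot c' b = a" unfolding s1 s2a s3a by simp
        then have s2: "P.stp (b, c') = (c', a)" using s2a by simp
        have tr': "P.orb (a, b) = {(a, b), (b, c'), (c', a)} \<and> (a, b) \<noteq> (b, c') \<and> (b, c') \<noteq> (c', a) \<and> (a, b) \<noteq> (c', a)"
          using tr unfolding y' s1 s2 by simp
        have E1: "(a, b) \<in> E" using y(1) y' by simp
        have E2: "(b, c') \<in> E" using P.stp_E[OF E1] s1 by simp
        have E3: "(c', a) \<in> E" using P.stp_E[OF E2] s2 by simp
        have Fe: "F = {(a, b), (b, c'), (c', a)}" using tr' y(2) y' by simp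
        have dist: "(a, b) \<noteq> (b, c')" "(b, c') \<noteq> (c', a)" "(a, b) \<noteq> (c', a)"
          using tr' by simp_all
        have hh: "hue a \<noteq> hue b" "hue b \<noteq> hue c'" "hue c' \<noteq> hue a"
          "g a \<noteq> g b" "g b \<noteq> g c'" "g c' \<noteq> g a" using E1 E2 E3 hueE gE by blast+
        have tri: "fst (D (a, b)) + fst (D (b, c')) + fst (D (c', a)) = 0 \<and>
                        snd (D (a, b)) + snd (D (b, c')) + snd (D (c', a)) = 0"
          using dirf_tri[OF hh] unfolding D_def by simp
        show ?thesis unfolding Fe using dist tri by (simp add: algebra_simps)
      qed
      have "\<exists>P1. \<forall>x\<in>E. fst (D x) = P1 (snd x) - P1 (fst x)"
      proof (rule P.lift[OF False eul'])
        show "\<And>x. x \<in> E \<Longrightarrow> fst (D (prod.swap x)) = - fst (D x)" using Danti by blast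
        show "\<And>f. f \<in> faces E rot \<Longrightarrow> f \<noteq> Out \<Longrightarrow> (\<Sum>x\<in>f. fst (D x)) = 0" using Dtri by blast
      qed
      then obtain P1 where P1: "\<forall>x\<in>E. fst (D x) = P1 (snd x) - P1 (fst x)" by blast
      have "\<exists>P2. \<forall>x\<in>E. snd (D x) = P2 (snd x) - P2 (fst x)"
      proof (rule P.lift[OF False eul'])
        show "\<And>x. x \<in> E \<Longrightarrow> snd (D (prod.swap x)) = - snd (D x)" using Danti by blast
        show "\<And>f. f \<in> faces E rot \<Longrightarrow> f \<noteq> Out \<Longrightarrow> (\<Sum>x\<in>f. snd (D x)) = 0" using Dtri by blast
      qed
      then obtain P2 where P2: "\<forall>x\<in>E. snd (D x) = P2 (snd x) - P2 (fst x)" by blast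
      define v0 where "v0 = fst x0"
      have v0b: "v0 \<in> bdry_V V Out" using x0O bdryV v0_def by simp
      have v0V: "v0 \<in> V" using v0b bV by blast
      define P where "P v = (P1 v - P1 v0 + fst (f v0), P2 v - P2 v0 + snd (f v0))" for v
      have PE: "fst (P w) = fst (P u) + fst (D (u, w)) \<and> snd (P w) = snd (P u) + snd (D (u, w))"
        if "(u, w) \<in> E" for u w using P1 P2 that by (simp add: P_def)
      have Pv0: "P v0 = f v0" by (simp add: P_def)
      have PV: "T_hue (P v) = hue v \<and> T_color (P v) = g v" if v: "v \<in> V" for v
      proof -
        have "(v0, v) \<in> E\<^sup>*" using cg v0V v unfolding connected_graph_def by blast
        then show ?thesis
        proof (induction rule: rtrancl_induct)
          case base then show ?case using Pv0 fhc[OF v0b] gb[OF v0b] by simp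
        next
          case (step p q)
          have hd: "hue p \<noteq> hue q" "g p \<noteq> g q" using step.hyps(2) hueE gE by auto
          have dh: "(of_int (fst (D (p, q)) + snd (D (p, q))) :: 3) = hue q - hue p \<and>
             (of_int (fst (D (p, q))) :: 2) = fst (g q) - fst (g p) \<and>
             (of_int (snd (D (p, q))) :: 2) = snd (g q) - snd (g p)"
            using dirf_hue[OF hd] unfolding D_def by simp
          have pq: "fst (P q) = fst (P p) + fst (D (p, q))" "snd (P q) = snd (P p) + snd (D (p, q))"
            using PE[OF step.hyps(2)] by simp_all
          have "T_hue (P q) = of_int (fst (P p) + snd (P p)) + of_int (fst (D (p, q)) + snd (D (p, q)))"
            unfolding T_hue_def pq by (simp add: algebra_simps)
          also have "\<dots> = hue q" using step.IH dh unfolding T_hue_def by simp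
          finally have 1: "T_hue (P q) = hue q" .
          have "T_color (P q) = (of_int (fst (P p)) + of_int (fst (D (p, q))), of_int (snd (P p)) + of_int (snd (D (p, q))))"
            unfolding T_color_def pq by simp
          also have "\<dots> = g q" using step.IH dh unfolding T_color_def by (simp add: prod_eq_iff)
          finally show ?case using 1 by simp
        qed
      qed
      have Pb_orb: "P (fst ((P.stp ^^ n) x0)) = f (fst ((P.stp ^^ n) x0))" for n
      proof (induction n)
        case 0 then show ?case using Pv0 v0_def by simp
      next
        case (Suc n)
        define y where "y = (P.stp ^^ n) x0"
        have yO: "y \<in> Out" unfolding y_def x0(2) P.orb_iff by blast
        have yE: "y \<in> E" using yO OutE by blast
        have syO: "P.stp y \<in> Out" using yO x0(2) P.orb_stp by simp
        have fy: "fst y \<in> bdry_V V Out" using yO bdryV by simp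
        have "snd y = fst (P.stp y)" by (simp add: P.fst_stp)
        then have sy: "snd y \<in> bdry_V V Out" using syO bdryV by simp
        have adj: "T_adj (f (fst y)) (f (snd y))" using fadj[of "fst y" "snd y"] OutbE[OF yO] by simp
        have "(fst (f (snd y)) - fst (f (fst y)), snd (f (snd y)) - snd (f (fst y))) =
              dirf (T_hue (f (fst y))) (T_hue (f (snd y))) (T_color (f (fst y))) (T_color (f (snd y)))"
          by (rule dir_T[OF adj])
        also have "\<dots> = D y" unfolding D_def using fhc[OF fy] fhc[OF sy] gb[OF fy] gb[OF sy] by simp
        finally have fd: "fst (f (snd y)) = fst (f (fst y)) + fst (D y)" "snd (f (snd y)) = snd (f (fst y)) + snd (D y)"
          by (simp_all add: prod_eq_iff)
        have pd: "fst (P (snd y)) = fst (P (fst y)) + fst (D y)" "snd (P (snd y)) = snd (P (fst y)) + snd (D y)"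
          using PE[of "fst y" "snd y"] yE by simp_all
        have "P (snd y) = f (snd y)" using fd pd Suc.IH unfolding y_def by (simp add: prod_eq_iff)
        then show ?case using P.fst_stp[of y] unfolding y_def by simp
      qed
      have Pb: "P v = f v" if v: "v \<in> bdry_V V Out" for v
      proof -
        obtain y where "y \<in> Out" "v = fst y" using v bdryV by blast
        then obtain n where "y = (P.stp ^^ n) x0" using x0(2) P.orb_iff by blast
        then show ?thesis using Pb_orb \<open>v = fst y\<close> by simp
      qed
      define sg where "sg v = sig (fst (P v) - fst z) (snd (P v) - snd z)" for v
      define h where "h v = T_color (fst z + fst (sg v), snd z + snd (sg v))" for v
      have VHhue: "((fst (P v) - fst z) + (snd (P v) - snd z)) mod 3 \<noteq> 0" if v: "v \<in> VH" for v
      proof -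
        have "v \<in> V" "hue v \<noteq> c" using v unfolding VH_def by auto
        then have "T_hue (P v) \<noteq> T_hue z" using PV hz by simp
        then show ?thesis by (rule hue_mod)
      qed
      show ?thesis
      proof (intro exI conjI ballI)
        show "proper_col VH (E \<inter> (VH \<times> VH)) h"
          unfolding proper_col_def
        proof (intro ballI, clarify)
          fix u w assume uw: "(u, w) \<in> E" "u \<in> VH" "w \<in> VH" and eq: "h u = h w"
          have d6: "D (u, w) \<in> six" unfolding D_def by (rule dirf_six)
          have pw: "fst (P w) - fst z = (fst (P u) - fst z) + fst (D (u, w))"
                   "snd (P w) - snd z = (snd (P u) - snd z) + snd (D (u, w))"
            using PE[OF uw(1)] by simp_all
          have "sig (fst (P u) - fst z) (snd (P u) - snd z) \<noteq>
                sig ((fst (P u) - fst z) + fst (D (u, w))) ((snd (P u) - snd z) + snd (D (u, w)))"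
          proof (rule sig_proper)
            show "(fst (P u) - fst z + (snd (P u) - snd z)) mod 3 \<noteq> 0" using VHhue[OF uw(2)] .
            show "(fst (P u) - fst z + fst (D (u, w)) + (snd (P u) - snd z + snd (D (u, w)))) mod 3 \<noteq> 0"
              using VHhue[OF uw(3)] pw by simp
            show "(fst (D (u, w)), snd (D (u, w))) \<in> six" using d6 by simp
          qed
          then have "sg u \<noteq> sg w" unfolding sg_def pw by simp
          moreover have "sg u \<in> S3" "sg w \<in> S3" unfolding sg_def by (rule sig_S3)+
          ultimately have "h u \<noteq> h w" unfolding h_def by (intro S3_col_inj) simp_all
          then show False using eq by simp
        qed
        show "h v \<in> UNIV - {k}" if "v \<in> VH" for v
        proof -
          have "sg v \<in> S3" unfolding sg_def by (rule sig_S3)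
          then have "h v \<noteq> T_color (fst z, snd z)" unfolding h_def by (rule S3_col)
          then show ?thesis using kz by simp
        qed
        show "h v = \<phi> v" if v: "v \<in> VH \<inter> bdry_V V Out" for v
        proof -
          have vb: "v \<in> bdry_V V Out" and hv: "hue v \<noteq> c" using v unfolding VH_def by auto
          have "T_adj z (f v)" by (rule hexv[OF vb hv])
          then have d: "(fst (f v) - fst z, snd (f v) - snd z) \<in> six" by (simp add: T_adj_six)
          have "h v = T_color (fst z + fst (sig (fst (f v) - fst z) (snd (f v) - snd z)),
                               snd z + snd (sig (fst (f v) - fst z) (snd (f v) - snd z)))"
            unfolding h_def sg_def using Pb[OF vb] by simp
          also have "\<dots> = T_color (fst z + (fst (f v) - fst z), snd z + (snd (f v) - snd z))"
            by (rule sig_six[OF d])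
          also have "\<dots> = T_color (f v)" by simp
          also have "\<dots> = \<phi> v" using fhc[OF vb] by simp
          finally show ?thesis .
        qed
      qed
    qed
  next
    assume "\<exists>h :: 'v \<Rightarrow> 2 \<times> 2. proper_col VH (E \<inter> (VH \<times> VH)) h \<and>
             (\<forall>v\<in>VH. h v \<in> UNIV - {k}) \<and> (\<forall>v\<in>VH \<inter> bdry_V V Out. h v = \<phi> v)"
    then obtain h :: "'v \<Rightarrow> 2 \<times> 2" where hp: "proper_col VH (E \<inter> (VH \<times> VH)) h"
      and hk: "\<And>v. v \<in> VH \<Longrightarrow> h v \<noteq> k" and hb: "\<And>v. v \<in> VH \<Longrightarrow> v \<in> bdry_V V Out \<Longrightarrow> h v = \<phi> v"
      by blast
    define g where "g v = (if hue v = c then k else h v)" for v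
    show "\<exists>g :: 'v \<Rightarrow> 2 \<times> 2. proper_col V E g \<and> (\<forall>v\<in>bdry_V V Out. g v = \<phi> v)"
    proof (intro exI conjI ballI)
      show "proper_col V E g" unfolding proper_col_def
      proof (intro ballI, clarify)
        fix u w assume uw: "(u, w) \<in> E" and eq: "g u = g w"
        have V: "u \<in> V" "w \<in> V" using uw P.EV by auto
        have hd: "hue u \<noteq> hue w" by (rule hueE[OF uw])
        show False
        proof (cases "hue u = c")
          case True
          then have "w \<in> VH" using V hd unfolding VH_def by auto
          then show False using eq True hd hk unfolding g_def by auto
        next
          case False
          then have u: "u \<in> VH" using V unfolding VH_def by auto
          show False
          proof (cases "hue w = c")
            case True
            then show False using eq False hk[OF u] unfolding g_def by auto
          next
            case False
            then have "w \<in> VH" using V unfolding VH_def by auto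
            then have "h u \<noteq> h w" using hp uw u unfolding proper_col_def by blast
            then show False using eq \<open>hue u \<noteq> c\<close> False unfolding g_def by simp
          qed
        qed
      qed
      show "g v = \<phi> v" if v: "v \<in> bdry_V V Out" for v
      proof (cases "hue v = c")
        case True then show ?thesis using hexk[OF v] unfolding g_def by simp
      next
        case False
        then have "v \<in> VH" using v bV unfolding VH_def by auto
        then show ?thesis using hb v False unfolding g_def by simp
      qed
    qed
  qed
qed


end
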